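(* Consider the family $Z\in\mathfrak X_S$ of the setup under the resonance condition $A=-2C$, i.e. the real eigenvalue of $DX$ equals minus twice the real part of its complex eigenvalues. Then there exist parameter values $(C,H,\Lambda)$ for which $Z$ admits at least one symmetric limit cycle. Here a symmetric limit cycle is an isolated crossing periodic orbit $\gamma$ with $S(\gamma)=\gamma$.
   Context: Setup. Fix real parameters $A\neq 0$, $C$, $H$, $\Lambda$. Let $\Sigma=\{z=0\}$, $\Sigma^+=\{z\ge0\}$ and $\Sigma^-=\{z<0\}$. Define $$X(x,y,z)=\big(Ax-H(((A-C)^2+1)z-\Lambda),\ \Lambda-(1+C^2)z,\ y+2Cz\big),$$ $$Y(x,y,z)=\big(-\Lambda-(1+C^2)z,\ Ay-H(((A-C)^2+1)z+\Lambda),\ x+2Cz\big).$$ $Z$ equals $X$ on $\Sigma^+$ and $Y$ on $\Sigma^-$; this family is denoted $\mathfrak X_S$. The matrices $DX$ and $DY$ have eigenvalues $A$ and $C\pm i$. The involution is $S(x,y,z)=(-y,-x,-z)$. A crossing periodic orbit is a periodic orbit of $Z$ made of an arc of $X$ in $\Sigma^+$ from $p_0\in\Sigma$ to $p_1\in\Sigma$, followed by an arc of $Y$ in $\Sigma^-$ from $p_1$ back to $p_0$. Both crossings are transversal, i.e. $X_3Y_3>0$ at $p_0$ and at $p_1$, where $X_3(x,y,0)=y$ and $Y_3(x,y,0)=x$. *)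

theory Defs
  imports "HOL-Analysis.Analysis"
begin

type_synonym pt = "real \<times> real \<times> real"

definition fX :: "real \<Rightarrow> real \<Rightarrow> real \<Rightarrow> real \<Rightarrow> pt \<Rightarrow> pt" where
  "fX A C H \<Lambda> p = (case p of (x, y, z) \<Rightarrow>
     (A * x - H * (((A - C)^2 + 1) * z - \<Lambda>), \<Lambda> - (1 + C^2) * z, y + 2 * C * z))"

definition fY :: "real \<Rightarrow> real \<Rightarrow> real \<Rightarrow> real \<Rightarrow> pt \<Rightarrow> pt" where
  "fY A C H \<Lambda> p = (case p of (x, y, z) \<Rightarrow>
     (- \<Lambda> - (1 + C^2) * z, A * y - H * (((A - C)^2 + 1) * z + \<Lambda>), x + 2 * C * z))"

definition zc :: "pt \<Rightarrow> real" where "zc p = snd (snd p)"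

definition Sinv :: "pt \<Rightarrow> pt" where
  "Sinv p = (case p of (x, y, z) \<Rightarrow> (- y, - x, - z))"

definition transversal :: "real \<Rightarrow> real \<Rightarrow> real \<Rightarrow> real \<Rightarrow> pt \<Rightarrow> bool" where
  "transversal A C H \<Lambda> p \<longleftrightarrow> zc p = 0 \<and>
     zc (fX A C H \<Lambda> p) * zc (fY A C H \<Lambda> p) > 0"

definition crossing_periodic_orbit :: "real \<Rightarrow> real \<Rightarrow> real \<Rightarrow> real \<Rightarrow> pt set \<Rightarrow> bool" where
  "crossing_periodic_orbit A C H \<Lambda> \<gamma> \<longleftrightarrow>
    (\<exists>p0 p1 t1 t2 \<phi> \<psi>. t1 > 0 \<and> t2 > 0 \<and>
       \<phi> 0 = p0 \<and> \<phi> t1 = p1 \<and> \<psi> 0 = p1 \<and> \<psi> t2 = p0 \<and>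
       (\<forall>t\<in>{0..t1}. (\<phi> has_vector_derivative fX A C H \<Lambda> (\<phi> t)) (at t within {0..t1})) \<and>
       (\<forall>t\<in>{0..t2}. (\<psi> has_vector_derivative fY A C H \<Lambda> (\<psi> t)) (at t within {0..t2})) \<and>
       (\<forall>t\<in>{0..t1}. zc (\<phi> t) \<ge> 0) \<and>
       (\<forall>t\<in>{0<..<t2}. zc (\<psi> t) < 0) \<and>
       transversal A C H \<Lambda> p0 \<and> transversal A C H \<Lambda> p1 \<and>
       \<gamma> = \<phi> ` {0..t1} \<union> \<psi> ` {0..t2})"

definition limit_cycle :: "real \<Rightarrow> real \<Rightarrow> real \<Rightarrow> real \<Rightarrow> pt set \<Rightarrow> bool" where
  "limit_cycle A C H \<Lambda> \<gamma> \<longleftrightarrow> crossing_periodic_orbit A C H \<Lambda> \<gamma> \<and>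
    (\<exists>\<epsilon>>0. \<forall>\<gamma>'. crossing_periodic_orbit A C H \<Lambda> \<gamma>' \<and> (\<forall>q\<in>\<gamma>'. infdist q \<gamma> < \<epsilon>)
       \<longrightarrow> \<gamma>' = \<gamma>)"

definition symmetric_limit_cycle :: "real \<Rightarrow> real \<Rightarrow> real \<Rightarrow> real \<Rightarrow> pt set \<Rightarrow> bool" where
  "symmetric_limit_cycle A C H \<Lambda> \<gamma> \<longleftrightarrow> limit_cycle A C H \<Lambda> \<gamma> \<and> Sinv ` \<gamma> = \<gamma>"

end

theory Submission
  imports Defs
begin

definition cC :: real where "cC = 2 * ln 2 / pi"
definition hH :: real where "hH = (8 + 6*cC)/(17 - 6*cC)"

abbreviation "FX \<equiv> fX (-2*cC) cC hH (-(1+cC^2))"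
abbreviation "FY \<equiv> fY (-2*cC) cC hH (-(1+cC^2))"

definition zf :: "real \<Rightarrow> real \<Rightarrow> real" where
  "zf b t = -1 + exp(cC*t)*cos t + (b - cC)*exp(cC*t)* sin t"
definition yf :: "real \<Rightarrow> real \<Rightarrow> real" where
  "yf b t = exp(cC*t)*(b*cos t + (cC*b - cC^2 - 1)* sin t) - 2*cC*zf b t"
definition xf :: "real \<Rightarrow> real \<Rightarrow> real \<Rightarrow> real" where
  "xf a b t = exp(-(2*cC*t))*a + hH*(4*cC*(1 - exp(-(2*cC*t))) - exp(cC*t)*(3*cC*cos t + sin t)
     + 3*cC*exp(-(2*cC*t)) - (b - cC)*(exp(cC*t)*(3*cC* sin t - cos t) + exp(-(2*cC*t))))"
definition sol :: "real \<Rightarrow> real \<Rightarrow> real \<Rightarrow> pt" where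
  "sol a b t = (xf a b t, yf b t, zf b t)"

lemma sol0: "sol a b 0 = (a, b, 0)"
  by (simp add: sol_def xf_def yf_def zf_def)

lemma exp_split: "exp(cC*t) * exp(cC*t) * exp(-(2*cC*t)) = 1"
  by (simp add: exp_add[symmetric] exp_minus_inverse)

lemma sol_deriv: "(sol a b has_vector_derivative FX (sol a b t)) (at t within S)"
proof -
  have z: "((zf b) has_real_derivative (yf b t + 2*cC*zf b t)) (at t within S)"
    unfolding zf_def yf_def
    by (rule derivative_eq_intros refl | simp)+ (simp add: algebra_simps power2_eq_square)
  have y: "((yf b) has_real_derivative (-(1+cC^2) - (1+cC^2)*zf b t)) (at t within S)"
    unfolding zf_def yf_def
    by (rule derivative_eq_intros refl | simp)+ (simp add: algebra_simps power2_eq_square)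
  have x: "((\<lambda>t. xf a b t) has_real_derivative ((-2*cC)*xf a b t - hH*(((-2*cC - cC)^2 + 1)*zf b t - (-(1+cC^2))))) (at t within S)"
    unfolding zf_def xf_def
    by (rule derivative_eq_intros refl | simp)+ (simp add: algebra_simps power2_eq_square)
  show ?thesis
    unfolding sol_def fX_def
    apply simp
    apply (intro has_vector_derivative_Pair)
    using x y z by (simp_all add: has_real_derivative_iff_has_vector_derivative)
qed

lemma ode_zero:
  fixes w :: "real \<Rightarrow> pt" and F :: "pt \<Rightarrow> pt"
  assumes T: "T \<ge> 0" and w0: "w 0 = 0"
    and d: "\<forall>t\<in>{0..T}. (w has_vector_derivative F (w t)) (at t within {0..T})"
    and bnd: "\<And>v. inner v (F v) \<le> L * inner v v"
  shows "\<forall>t\<in>{0..T}. w t = 0"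
proof -
  define V where "V t = exp (-(2*L*t)) * inner (w t) (w t)" for t
  have dV: "(V has_real_derivative exp (-(2*L*t)) * (2 * inner (w t) (F (w t)) - 2*L*inner (w t) (w t))) (at t within {0..T})"
    if t: "t \<in> {0..T}" for t
  proof -
    have dw: "(w has_derivative (\<lambda>h. h *\<^sub>R F (w t))) (at t within {0..T})"
      using d t by (simp add: has_vector_derivative_def)
    have "((\<lambda>t. inner (w t) (w t)) has_derivative (\<lambda>h. inner (w t) (h *\<^sub>R F (w t)) + inner (h *\<^sub>R F (w t)) (w t))) (at t within {0..T})"
      by (rule has_derivative_inner[OF dw dw])
    then have "((\<lambda>t. inner (w t) (w t)) has_real_derivative 2 * inner (w t) (F (w t))) (at t within {0..T})"
      unfolding has_field_derivative_def
      by (rule has_derivative_eq_rhs) (auto simp: fun_eq_iff inner_commute algebra_simps)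
    moreover have "((\<lambda>t. exp (-(2*L*t))) has_real_derivative exp (-(2*L*t)) * (-(2*L))) (at t within {0..T})"
      by (rule derivative_eq_intros refl | simp)+
    ultimately show ?thesis unfolding V_def
      by (intro DERIV_cong[OF DERIV_mult]) (auto simp: algebra_simps)
  qed
  have cont: "continuous_on {0..T} V"
    using dV by (meson has_field_derivative_imp_has_derivative has_derivative_continuous continuous_on_eq_continuous_within)
  have le: "V t \<le> V 0" if t: "t \<in> {0..T}" for t
  proof -
    have "V 0 \<ge> V t"
    proof (rule DERIV_nonpos_imp_decreasing_open[of 0 t V])
      show "0 \<le> t" using t by simp
      show "continuous_on {0..t} V" using t by (intro continuous_on_subset[OF cont]) auto
      fix x assume x: "0 < x" "x < t"
      then have "at x within {0..T} = at x" using t by (intro at_within_Icc_at) auto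
      moreover have "exp (-(2*L*x)) * (2 * inner (w x) (F (w x)) - 2*L*inner (w x) (w x)) \<le> 0"
        using bnd[of "w x"] by (intro mult_nonneg_nonpos) auto
      ultimately show "\<exists>y. DERIV V x :> y \<and> y \<le> 0" using dV[of x] x t by auto
    qed
    then show ?thesis .
  qed
  show ?thesis
  proof
    fix t assume t: "t \<in> {0..T}"
    have "V t \<le> 0" using le[OF t] w0 by (simp add: V_def)
    then have "inner (w t) (w t) \<le> 0" unfolding V_def by (simp add: mult_le_0_iff)
    then show "w t = 0" by (metis inner_eq_zero_iff inner_ge_zero order.antisym)
  qed
qed

definition Lin :: "pt \<Rightarrow> pt" where
  "Lin v = (case v of (x, y, z) \<Rightarrow> ((-2*cC)*x - hH*(9*cC^2+1)*z, -(1+cC^2)*z, y + 2*cC*z))"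

lemma FX_diff: "FX p - FX q = Lin (p - q)"
  by (cases p; cases q) (simp add: fX_def Lin_def algebra_simps power2_eq_square)

lemma abs_prod_le: "\<bar>u * w\<bar> \<le> u^2 + (w::real)^2"
proof -
  have "\<bar>u*w\<bar> = \<bar>u\<bar>*\<bar>w\<bar>" by (simp add: abs_mult)
  also have "\<dots> \<le> 2*\<bar>u\<bar>*\<bar>w\<bar>" by simp
  also have "\<dots> \<le> \<bar>u\<bar>^2 + \<bar>w\<bar>^2" by (rule sum_squares_bound)
  also have "\<dots> = u^2+w^2" by simp
  finally show ?thesis .
qed

lemma cross_bnd: "-(k*u*w) \<le> \<bar>k\<bar> * (u^2 + (w::real)^2)"
proof -
  have "-(k*u*w) \<le> \<bar>k\<bar> * \<bar>u*w\<bar>" by (simp add: abs_mult flip: mult.assoc) (metis abs_ge_minus_self abs_mult mult.assoc)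
  also have "\<dots> \<le> \<bar>k\<bar> * (u^2 + w^2)" by (rule mult_left_mono[OF abs_prod_le]) simp
  finally show ?thesis .
qed

lemma Lin_bnd: "inner v (Lin v) \<le> (2*\<bar>cC\<bar> + \<bar>hH*(9*cC^2+1)\<bar> + cC^2) * inner v v"
proof (cases v)
  case (fields x y z)
  have e1: "-((hH*(9*cC^2+1))*x*z) \<le> \<bar>hH*(9*cC^2+1)\<bar> * (x^2+z^2)" by (rule cross_bnd)
  have e2: "-((cC^2)*y*z) \<le> \<bar>cC^2\<bar> * (y^2+z^2)" by (rule cross_bnd)
  have e3: "(-2*cC)*x^2 \<le> 2*\<bar>cC\<bar>*x^2" "2*cC*z^2 \<le> 2*\<bar>cC\<bar>*z^2"
    using mult_right_mono[OF abs_ge_minus_self[of cC] zero_le_power2[of x]]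
      mult_right_mono[OF abs_ge_self[of cC] zero_le_power2[of z]] by auto
  have e4: "0 \<le> \<bar>hH*(9*cC^2+1)\<bar> * y^2" "0 \<le> 2*\<bar>cC\<bar>*y^2" "0 \<le> cC^2*x^2" "0 \<le> 2*\<bar>cC\<bar>*z^2" "0 \<le> 2*\<bar>cC\<bar>*x^2"
    by (auto intro!: mult_nonneg_nonneg)
  have "inner v (Lin v) = (-2*cC)*x^2 - ((hH*(9*cC^2+1))*x*z) - ((cC^2)*y*z) + 2*cC*z^2"
    using fields by (simp add: Lin_def inner_prod_def algebra_simps power2_eq_square)
  moreover have "inner v v = x^2+y^2+z^2" using fields by (simp add: inner_prod_def power2_eq_square)
  moreover have "(2*\<bar>cC\<bar> + \<bar>hH*(9*cC^2+1)\<bar> + cC^2) * (x^2+y^2+z^2) =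
     2*\<bar>cC\<bar>*x^2 + 2*\<bar>cC\<bar>*y^2 + 2*\<bar>cC\<bar>*z^2 + \<bar>hH*(9*cC^2+1)\<bar> * (x^2+z^2)
     + \<bar>hH*(9*cC^2+1)\<bar> * y^2 + cC^2 * (y^2+z^2) + cC^2*x^2"
    by (simp add: algebra_simps)
  moreover have "\<bar>cC^2\<bar> = cC^2" by simp
  ultimately show ?thesis using e1 e2 e3 e4 by (simp only:)
qed

lemma X_unique:
  assumes "t1 \<ge> 0" "phi 0 = (a, b, 0)"
    and "\<forall>t\<in>{0..t1}. (phi has_vector_derivative FX (phi t)) (at t within {0..t1})"
  shows "\<forall>t\<in>{0..t1}. phi t = sol a b t"
proof -
  have "\<forall>t\<in>{0..t1}. (\<lambda>t. phi t - sol a b t) t = 0"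
  proof (rule ode_zero[where F = Lin])
    show "(\<lambda>t. phi t - sol a b t) 0 = 0" using assms by (simp add: sol0)
    show "\<forall>t\<in>{0..t1}. ((\<lambda>t. phi t - sol a b t) has_vector_derivative Lin ((\<lambda>t. phi t - sol a b t) t)) (at t within {0..t1})"
      using assms(3) sol_deriv by (auto intro!: derivative_eq_intros simp: FX_diff[symmetric])
    show "\<And>v. inner v (Lin v) \<le> (2*\<bar>cC\<bar> + \<bar>hH*(9*cC^2+1)\<bar> + cC^2) * inner v v" by (rule Lin_bnd)
  qed (use assms in auto)
  then show ?thesis by auto
qed

lemma Sinv_alt: "Sinv p = (-(fst (snd p)), -(fst p), -(snd (snd p)))"
  by (cases p) (simp add: Sinv_def)

lemma Sinv_Sinv[simp]: "Sinv (Sinv p) = p"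
  by (cases p) (simp add: Sinv_def)

lemma Sinv_FY: "Sinv (FY p) = FX (Sinv p)"
  by (cases p) (simp add: Sinv_def fX_def fY_def algebra_simps)

lemma zc_Sinv[simp]: "zc (Sinv p) = - zc p"
  by (cases p) (simp add: Sinv_def zc_def)

lemma Sinv_deriv:
  assumes "(psi has_vector_derivative v) (at t within S)"
  shows "((\<lambda>t. Sinv (psi t)) has_vector_derivative Sinv v) (at t within S)"
proof -
  have d: "(psi has_derivative (\<lambda>h. h *\<^sub>R v)) (at t within S)"
    using assms by (simp add: has_vector_derivative_def)
  have "((\<lambda>t. (-(fst (snd (psi t))), -(fst (psi t)), -(snd (snd (psi t))))) has_derivative
     (\<lambda>h. (-(fst (snd (h *\<^sub>R v))), -(fst (h *\<^sub>R v)), -(snd (snd (h *\<^sub>R v)))))) (at t within S)"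
    by (intro derivative_intros d)
  then show ?thesis unfolding has_vector_derivative_def Sinv_alt
    by (rule has_derivative_eq_rhs) (auto simp: fun_eq_iff)
qed

lemma Y_to_X:
  assumes "(psi has_vector_derivative FY (psi t)) (at t within S)"
  shows "((\<lambda>t. Sinv (psi t)) has_vector_derivative FX (Sinv (psi t))) (at t within S)"
  using Sinv_deriv[OF assms] unfolding Sinv_FY .

definition Bf :: "real \<Rightarrow> real" where
  "Bf t = (exp (-(cC*t)) - cos t) / sin t + cC"
definition Bd :: "real \<Rightarrow> real" where
  "Bd t = (1 - exp (-(cC*t)) * (cos t + cC * sin t)) / (sin t)^2"

lemma zf_Bf: "sin t \<noteq> 0 \<Longrightarrow> zf b t = exp (cC*t) * sin t * (b - Bf t)"
  by (simp add: zf_def Bf_def field_simps exp_minus_inverse)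

lemma Bf_deriv: "sin t \<noteq> 0 \<Longrightarrow> (Bf has_real_derivative Bd t) (at t within S)"
  unfolding Bf_def Bd_def
  apply (rule derivative_eq_intros refl | simp)+
  by (simp add: field_simps power2_eq_square)

lemma Nf_pos:
  assumes "0 < t" "t \<le> pi"
  shows "0 < 1 - exp (-(cC*t)) * (cos t + cC * sin t)"
proof -
  define N where "N t = 1 - exp (-(cC*t)) * (cos t + cC * sin t)" for t
  have dN: "(N has_real_derivative (1+cC^2) * exp (-(cC*x)) * sin x) (at x)" for x
    unfolding N_def by (rule derivative_eq_intros refl | simp)+ (simp add: algebra_simps power2_eq_square)
  have "N 0 < N t"
  proof (rule DERIV_pos_imp_increasing_open[of 0 t N])
    show "0 < t" by fact
    fix x assume x: "0 < x" "x < t"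
    then have "sin x > 0" using assms by (intro sin_gt_zero) auto
    then show "\<exists>y. DERIV N x :> y \<and> 0 < y" using dN[of x]
      by (intro exI[of _ "(1+cC^2) * exp (-(cC*x)) * sin x"]) (auto intro!: mult_pos_pos add_pos_nonneg)
  next
    show "continuous_on {0..t} N"
      using dN by (intro continuous_at_imp_continuous_on) (auto intro: DERIV_isCont)
  qed
  then show ?thesis by (simp add: N_def)
qed

lemma Bd_pos: "0 < t \<Longrightarrow> t < pi \<Longrightarrow> 0 < Bd t"
  unfolding Bd_def using Nf_pos[of t] sin_gt_zero[of t] by simp

lemma Bf_mono:
  assumes "0 < s" "s < t" "t < pi"
  shows "Bf s < Bf t"
proof (rule DERIV_pos_imp_increasing[of s t Bf])
  fix x assume x: "s \<le> x" "x \<le> t"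
  then have "0 < x" "x < pi" using assms by auto
  then show "\<exists>y. DERIV Bf x :> y \<and> 0 < y"
    using Bd_pos Bf_deriv sin_gt_zero by (metis less_irrefl)
qed (use assms in auto)

lemma Bf_pos:
  assumes "0 < t" "t < pi"
  shows "0 < Bf t"
proof -
  define P where "P t = exp (cC*t) * (cos t - cC * sin t)" for t
  have dP: "(P has_real_derivative -((1+cC^2) * exp (cC*x) * sin x)) (at x)" for x
    unfolding P_def by (rule derivative_eq_intros refl | simp)+ (simp add: algebra_simps power2_eq_square)
  have "P 0 > P t"
  proof (rule DERIV_neg_imp_decreasing_open[of 0 t P])
    show "0 < t" by fact
    fix x assume x: "0 < x" "x < t"
    then have "sin x > 0" using assms by (intro sin_gt_zero) auto
    then show "\<exists>y. DERIV P x :> y \<and> y < 0" using dP[of x]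
      by (intro exI[of _ "-((1+cC^2) * exp (cC*x) * sin x)"]) (auto intro!: mult_pos_pos add_pos_nonneg)
  next
    show "continuous_on {0..t} P"
      using dP by (intro continuous_at_imp_continuous_on) (auto intro: DERIV_isCont)
  qed
  then have "zf 0 t < 0" by (simp add: P_def zf_def algebra_simps)
  moreover have "sin t > 0" using assms by (intro sin_gt_zero) auto
  ultimately show ?thesis using zf_Bf[of t 0] by (simp add: zero_less_mult_iff) (smt (verit) exp_gt_zero mult_pos_pos)
qed

lemma zf_pi: "zf b pi < 0"
  by (simp add: zf_def) (smt (verit) exp_gt_zero)

lemma arc:
  assumes t1: "t1 > 0" and nn: "\<forall>t\<in>{0..t1}. zf b t \<ge> 0" and z1: "zf b t1 = 0"
  shows "t1 < pi" "b = Bf t1" "\<forall>t\<in>{0<..<t1}. zf b t > 0" "b > 0"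
proof -
  show tp: "t1 < pi"
  proof (rule ccontr)
    assume "\<not> t1 < pi"
    then have "pi \<in> {0..t1}" by auto
    then have "zf b pi \<ge> 0" using nn by blast
    then show False using zf_pi[of b] by simp
  qed
  have s1: "sin t1 > 0" using t1 tp by (intro sin_gt_zero)
  then show b: "b = Bf t1" using zf_Bf[of t1 b] z1 by simp
  show "b > 0" using Bf_pos[OF t1 tp] b by simp
  show "\<forall>t\<in>{0<..<t1}. zf b t > 0"
  proof
    fix t assume t: "t \<in> {0<..<t1}"
    then have "sin t > 0" using tp by (intro sin_gt_zero) auto
    moreover have "Bf t < b" using Bf_mono[of t t1] t tp b by auto
    ultimately show "zf b t > 0" using zf_Bf[of t b] by simp
  qed
qed

definition Yg :: "real \<Rightarrow> real \<Rightarrow> real" where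
  "Yg b s = exp (cC* s) * (b * cos s + (cC*b - cC^2 - 1) * sin s)"
definition gf :: "real \<Rightarrow> real" where
  "gf s = - Yg (Bf s) s"
definition gd :: "real \<Rightarrow> real" where
  "gd s = -(cC * Yg (Bf s) s + exp (cC* s) * (-(Bf s) * sin s + (cC * Bf s - cC^2 - 1) * cos s)
      + exp (cC* s) * (cos s + cC * sin s) * Bd s)"
definition Rf :: "real \<Rightarrow> real" where
  "Rf s = 4*cC*(1 - exp (-(2*cC* s))) - exp (cC* s) * (3*cC * cos s + sin s) + 3*cC*exp (-(2*cC* s))
      - (Bf s - cC) * (exp (cC* s) * (3*cC * sin s - cos s) + exp (-(2*cC* s)))"
definition Rd :: "real \<Rightarrow> real" where
  "Rd s = 8*cC^2*exp (-(2*cC* s)) - (cC*exp (cC* s) * (3*cC * cos s + sin s) + exp (cC* s) * (-3*cC * sin s + cos s))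
      - 6*cC^2*exp (-(2*cC* s)) - Bd s * (exp (cC* s) * (3*cC * sin s - cos s) + exp (-(2*cC* s)))
      - (Bf s - cC) * (cC*exp (cC* s) * (3*cC * sin s - cos s) + exp (cC* s) * (3*cC * cos s + sin s) - 2*cC*exp (-(2*cC* s)))"
definition Ef :: "real \<Rightarrow> real \<Rightarrow> real" where
  "Ef s t = Bf t + exp (-(2*cC* s)) * gf t + hH * Rf s"

lemma xf_Bf: "xf a (Bf s) s = exp (-(2*cC* s)) * a + hH * Rf s"
  by (simp add: xf_def Rf_def)

lemma yf_Bf: "sin s \<noteq> 0 \<Longrightarrow> yf (Bf s) s = - gf s"
  using zf_Bf[of s "Bf s"] by (simp add: yf_def gf_def Yg_def)

lemma Bf_chain:
  "(f has_real_derivative f') (at x within S) \<Longrightarrow> sin (f x) \<noteq> 0 \<Longrightarrow>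
   ((\<lambda>x. Bf (f x)) has_real_derivative Bd (f x) * f') (at x within S)"
  by (rule DERIV_chain2[OF Bf_deriv])

lemma gf_deriv: "sin s \<noteq> 0 \<Longrightarrow> (gf has_real_derivative gd s) (at s within S)"
  unfolding gf_def gd_def Yg_def
  apply (rule derivative_eq_intros Bf_chain refl | simp)+
  by (simp add: algebra_simps power2_eq_square)

lemma Rf_deriv: "sin s \<noteq> 0 \<Longrightarrow> (Rf has_real_derivative Rd s) (at s within S)"
  unfolding Rf_def Rd_def
  apply (rule derivative_eq_intros Bf_chain refl | simp)+
  by (simp add: algebra_simps power2_eq_square)

lemma gf_chain:
  "(f has_real_derivative f') (at x within S) \<Longrightarrow> sin (f x) \<noteq> 0 \<Longrightarrow>
   ((\<lambda>x. gf (f x)) has_real_derivative gd (f x) * f') (at x within S)"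
  by (rule DERIV_chain2[OF gf_deriv])

lemma Rf_chain:
  "(f has_real_derivative f') (at x within S) \<Longrightarrow> sin (f x) \<noteq> 0 \<Longrightarrow>
   ((\<lambda>x. Rf (f x)) has_real_derivative Rd (f x) * f') (at x within S)"
  by (rule DERIV_chain2[OF Rf_deriv])

definition Tq :: real where "Tq = pi/2"

lemma ln2_gt: "3/5 < ln (2::real)"
proof -
  have a: "4/5 \<le> exp (-(1/5::real))" using exp_ge_add_one_self[of "-(1/5)"] by simp
  have "exp (-(1/5::real))^3 = exp (of_nat 3 * (-(1/5)))" by (rule exp_of_nat_mult[symmetric])
  then have b: "exp (-(3/5::real)) = exp (-(1/5::real))^3" by simp
  have "(4/5::real)^3 \<le> exp (-(1/5::real))^3" by (rule power_mono[OF a]) simp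
  moreover have "(4/5::real)^3 = 64/125" by (simp add: power3_eq_cube)
  ultimately have c: "64/125 \<le> exp (-(3/5::real))" using b by simp
  have "exp (3/5::real) = 1 / exp (-(3/5))" using exp_minus_inverse[of "3/5::real"] by (simp add: eq_divide_eq)
  also have "\<dots> \<le> 1 / (64/125)" using c by (intro divide_left_mono) auto
  also have "\<dots> < 2" by simp
  finally have "exp (3/5::real) < exp (ln 2)" by simp
  then show ?thesis by (simp only: exp_less_cancel_iff)
qed

lemma cC_bounds: "3/10 < cC" "cC < 1"
proof -
  have p: "2 \<le> pi" "pi < 4" using pi_ge_two pi_less_4 .
  have l: "3/5 < ln (2::real)" "ln (2::real) < 1" using ln2_gt ln_2_less_1 .
  have "3/10 < 2 * ln 2 / (4::real)" using l by simp
  also have "\<dots> < 2 * ln 2 / pi" using p l by (intro divide_strict_left_mono) auto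
  finally show "3/10 < cC" by (simp add: cC_def)
  have "2 * ln 2 / pi \<le> 2 * ln 2 / (2::real)" using p l by (intro divide_left_mono) auto
  also have "\<dots> < 1" using l by simp
  finally show "cC < 1" by (simp add: cC_def)
qed

lemma Tq_vals: "sin Tq = 1" "cos Tq = 0" "exp (cC*Tq) = 2" "exp (-(cC*Tq)) = 1/2" "exp (-(2*cC*Tq)) = 1/4"
proof -
  show "sin Tq = 1" "cos Tq = 0" by (simp_all add: Tq_def)
  have e: "cC*Tq = ln 2" by (simp add: cC_def Tq_def)
  then show "exp (cC*Tq) = 2" by simp
  show "exp (-(cC*Tq)) = 1/2" using e by (simp add: exp_minus)
  have "2*cC*Tq = 2 * ln 2" using e by simp
  then have "exp (2*cC*Tq) = 2^2" by (metis exp_ln exp_of_nat_mult of_nat_numeral zero_less_numeral)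
  then show "exp (-(2*cC*Tq)) = 1/4" by (simp add: exp_minus)
qed

lemma Tq_pos: "0 < Tq" "Tq < pi" by (simp_all add: Tq_def)

lemma vals_T: "Bf Tq = 1/2 + cC" "Bd Tq = 1 - cC/2" "gf Tq = 2 - cC" "gd Tq = 2*cC + 1"
  "Rf Tq = 3*cC/4 - 17/8" "Rd Tq = cC^2/2 - 13*cC/8 - 5/4"
  by (simp only: Bf_def Bd_def gf_def gd_def Rf_def Rd_def Yg_def Tq_vals; simp add: algebra_simps power2_eq_square)+

lemma Ef_T: "Ef Tq Tq = 0"
proof -
  have "17 - 6*cC > 0" using cC_bounds by simp
  then show ?thesis by (simp only: Ef_def vals_T Tq_vals) (simp add: hH_def field_simps)
qed

definition Gp :: "real \<Rightarrow> real \<Rightarrow> real" where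
  "Gp u v = Bd v + exp (-(2*cC*u)) * (gd v + 2*cC*gf v) - hH * Rd u"
definition Psd :: "real \<Rightarrow> real" where
  "Psd u = Bd u + exp (-(2*cC*u)) * (gd u - 2*cC*gf u) + hH * Rd u"

lemma Ef_gen_deriv:
  fixes u v :: "real \<Rightarrow> real"
  assumes du: "(u has_real_derivative du) (at l)" and dv: "(v has_real_derivative dv) (at l)"
    and su: "sin (u l) \<noteq> 0" and sv: "sin (v l) \<noteq> 0"
  shows "((\<lambda>l. Ef (u l) (v l)) has_real_derivative
     Bd (v l) * dv + exp (-(2*cC*u l)) * (gd (v l) * dv) - 2*cC*du*exp (-(2*cC*u l)) * gf (v l) + hH * (Rd (u l) * du)) (at l)"
proof -
  have "((\<lambda>l. Bf (v l) + exp (-(2*cC*u l)) * gf (v l) + hH * Rf (u l)) has_real_derivative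
     Bd (v l) * dv + (exp (-(2*cC*u l)) * (-(2*cC*du)) * gf (v l) + exp (-(2*cC*u l)) * (gd (v l) * dv)) + hH * (Rd (u l) * du)) (at l)"
  proof -
    have de: "((\<lambda>l. exp (-(2*cC*u l))) has_real_derivative exp (-(2*cC*u l)) * (-(2*cC*du))) (at l)"
      by (rule derivative_eq_intros du refl | simp)+
    show ?thesis
      using DERIV_add[OF DERIV_add[OF Bf_chain[OF dv sv] DERIV_mult[OF de gf_chain[OF dv sv]]] DERIV_cmult[OF Rf_chain[OF du su], of hH]]
      by (rule DERIV_cong) (simp add: algebra_simps)
  qed
  then show ?thesis unfolding Ef_def by (rule DERIV_cong) (simp add: algebra_simps)
qed

lemma Ef_path_deriv:
  assumes "sin (t + l*(s-t)) \<noteq> 0" "sin (s + l*(t-s)) \<noteq> 0"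
  shows "((\<lambda>l. Ef (t + l*(s-t)) (s + l*(t-s))) has_real_derivative (t-s) * Gp (t + l*(s-t)) (s + l*(t-s))) (at l)"
proof -
  have du: "((\<lambda>l. t + l*(s-t)) has_real_derivative (s-t)) (at l)"
    by (rule derivative_eq_intros refl | simp)+
  have dv: "((\<lambda>l. s + l*(t-s)) has_real_derivative (t-s)) (at l)"
    by (rule derivative_eq_intros refl | simp)+
  show ?thesis
    using Ef_gen_deriv[OF du dv assms] unfolding Gp_def
    by (rule DERIV_cong) (simp add: algebra_simps)
qed

lemma Ef_diag_deriv:
  assumes "sin u \<noteq> 0"
  shows "((\<lambda>u. Ef u u) has_real_derivative Psd u) (at u)"
  using Ef_gen_deriv[OF DERIV_ident DERIV_ident assms assms] unfolding Psd_def
  by (rule DERIV_cong) (simp add: algebra_simps)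

lemma hH_pos: "0 < hH"
proof -
  have "0 < 8 + 6*cC" "0 < 17 - 6*cC" using cC_bounds by auto
  then show ?thesis by (simp add: hH_def)
qed

lemma K1: "0 < gd Tq + 2*cC*gf Tq"
proof -
  have a: "cC*cC < cC" using cC_bounds by (simp add: mult_less_cancel_left1)
  have "gd Tq + 2*cC*gf Tq = 1 + 6*cC - 2*(cC*cC)" by (simp add: vals_T algebra_simps)
  then show ?thesis using a cC_bounds by linarith
qed

lemma K2: "Rd Tq < 0"
proof -
  have "cC^2 < cC" using cC_bounds by (simp add: power2_eq_square)
  then show ?thesis using cC_bounds by (simp add: vals_T)
qed

lemma K3: "Psd Tq < 0"
proof -
  have d: "17 - 6*cC > 0" using cC_bounds by simp
  have q: "0 < (10*cC - 3) * (1 - cC)" using cC_bounds by (intro mult_pos_pos) auto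
  have "(10*cC - 3) * (1 - cC) = 13*cC - 3 - 10*cC^2" by (simp add: algebra_simps power2_eq_square)
  then have "10*cC^2 < 13*cC - 3" using q by linarith
  then have neg: "70*cC^2 - 360*cC + 90 < 0" using cC_bounds by linarith
  have h: "hH * (17 - 6*cC) = 8 + 6*cC" using d by (simp add: hH_def)
  have P: "Psd Tq = (1 - cC/2) + (1/4)*((2*cC+1) - 2*cC*(2 - cC)) + hH*(cC^2/2 - 13*cC/8 - 5/4)"
    by (simp only: Psd_def vals_T Tq_vals)
  have "Psd Tq * (8*(17 - 6*cC))
     = 8*(17 - 6*cC)*((1 - cC/2) + (1/4)*((2*cC+1) - 2*cC*(2 - cC))) + (hH * (17 - 6*cC))*(4*cC^2 - 13*cC - 10)"
    unfolding P by (simp add: algebra_simps)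
  also have "\<dots> = 70*cC^2 - 360*cC + 90" unfolding h by (simp add: algebra_simps power2_eq_square)
  finally have "Psd Tq * (8*(17 - 6*cC)) < 0" using neg by simp
  then show ?thesis using d by (simp add: mult_less_0_iff)
qed

lemma isCont_Bf: "sin x \<noteq> 0 \<Longrightarrow> isCont Bf x"
  using Bf_deriv DERIV_isCont by blast
lemma isCont_Bd: "sin x \<noteq> 0 \<Longrightarrow> isCont Bd x"
  unfolding Bd_def by (auto intro!: continuous_intros)
lemma isCont_gf: "sin x \<noteq> 0 \<Longrightarrow> isCont gf x"
  using gf_deriv DERIV_isCont by blast
lemma isCont_Rf: "sin x \<noteq> 0 \<Longrightarrow> isCont Rf x"
  using Rf_deriv DERIV_isCont by blast
lemma isCont_gd: "sin x \<noteq> 0 \<Longrightarrow> isCont gd x"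
  unfolding gd_def Yg_def by (auto intro!: continuous_intros isCont_Bf isCont_Bd)
lemma isCont_Rd: "sin x \<noteq> 0 \<Longrightarrow> isCont Rd x"
  unfolding Rd_def by (auto intro!: continuous_intros isCont_Bf isCont_Bd)

lemma isCont_pos_nbhd:
  fixes f :: "real \<Rightarrow> real"
  assumes "isCont f x" "0 < f x"
  shows "\<exists>d>0. \<forall>y. \<bar>y - x\<bar> < d \<longrightarrow> 0 < (f y::real)"
proof -
  from assms(1) have "f \<midarrow>x\<rightarrow> f x" by (simp add: isCont_def)
  from LIM_D[OF this assms(2)] obtain d where d: "d > 0" "\<forall>y. y \<noteq> x \<and> norm (y - x) < d \<longrightarrow> norm (f y - f x) < f x"
    by blast
  show ?thesis
  proof (intro exI[of _ d] conjI allI impI)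
    fix y assume "\<bar>y - x\<bar> < d"
    then show "0 < f y" using d assms(2) by (cases "y = x") (auto simp: abs_less_iff)
  qed (use d in auto)
qed

lemma conv_in:
  fixes a b l T d :: real
  assumes "0 \<le> l" "l \<le> 1" "\<bar>a - T\<bar> < d" "\<bar>b - T\<bar> < d"
  shows "\<bar>a + l*(b - a) - T\<bar> < d"
proof -
  have e: "a + l*(b - a) - T = (1 - l)*(a - T) + l*(b - T)" by (simp add: algebra_simps)
  have "\<bar>(1 - l)*(a - T)\<bar> \<le> (1 - l)*d" using assms by (simp add: abs_mult mult_left_mono)
  moreover have "\<bar>l*(b - T)\<bar> \<le> l*d" using assms by (simp add: abs_mult mult_left_mono)
  moreover have "(1 - l)*d + l*d = d" by (simp add: algebra_simps)
  moreover have "\<bar>(1 - l)*(a - T)\<bar> < (1 - l)*d \<or> \<bar>l*(b - T)\<bar> < l*d"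
    using assms by (cases "l = 1") (auto simp: abs_mult)
  ultimately show ?thesis unfolding e by (smt (verit) abs_triangle_ineq)
qed

lemma local_unique:
  obtains dl where "dl > 0" "dl \<le> pi/2"
    "\<And>s t. \<bar>s - Tq\<bar> < dl \<Longrightarrow> \<bar>t - Tq\<bar> < dl \<Longrightarrow> Ef s t = 0 \<Longrightarrow> Ef t s = 0 \<Longrightarrow> s = Tq \<and> t = Tq"
proof -
  have sT: "sin Tq \<noteq> 0" by (simp add: Tq_vals)
  have c1: "isCont (\<lambda>y. gd y + 2*cC*gf y) Tq" by (intro continuous_intros isCont_gd isCont_gf sT)
  have c2: "isCont (\<lambda>y. - Rd y) Tq" by (intro continuous_intros isCont_Rd sT)
  have c3: "isCont (\<lambda>y. - Psd y) Tq" unfolding Psd_def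
    by (intro continuous_intros isCont_Rd isCont_gd isCont_gf isCont_Bd sT)
  obtain d1 where d1: "d1 > 0" "\<forall>y. \<bar>y - Tq\<bar> < d1 \<longrightarrow> 0 < gd y + 2*cC*gf y"
    using isCont_pos_nbhd[OF c1] K1 by auto
  obtain d2 where d2: "d2 > 0" "\<forall>y. \<bar>y - Tq\<bar> < d2 \<longrightarrow> 0 < - Rd y"
    using isCont_pos_nbhd[OF c2] K2 by auto
  obtain d3 where d3: "d3 > 0" "\<forall>y. \<bar>y - Tq\<bar> < d3 \<longrightarrow> 0 < - Psd y"
    using isCont_pos_nbhd[OF c3] K3 by auto
  define dl where "dl = min (min d1 d2) (min d3 (pi/2))"
  have dl: "dl > 0" "dl \<le> pi/2" using d1 d2 d3 by (auto simp: dl_def)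
  have inside: "0 < y \<and> y < pi" if "\<bar>y - Tq\<bar> < dl" for y
    using that dl by (auto simp: Tq_def abs_less_iff)
  have sinne: "sin y \<noteq> 0" if "\<bar>y - Tq\<bar> < dl" for y
    using inside[OF that] sin_gt_zero by force
  have Gpos: "0 < Gp u v" if "\<bar>u - Tq\<bar> < dl" "\<bar>v - Tq\<bar> < dl" for u v
  proof -
    have "0 < Bd v" using inside[OF that(2)] Bd_pos by auto
    moreover have "0 < exp (-(2*cC*u)) * (gd v + 2*cC*gf v)"
      using d1 that by (intro mult_pos_pos) (auto simp: dl_def)
    moreover have "0 < hH * (- Rd u)" using d2 that hH_pos by (intro mult_pos_pos) (auto simp: dl_def)
    ultimately show ?thesis by (simp add: Gp_def)
  qed
  have Pneg: "Psd u < 0" if "\<bar>u - Tq\<bar> < dl" for u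
    using d3 that by (auto simp: dl_def)
  show thesis
  proof (rule that[OF dl])
    fix s t assume hs: "\<bar>s - Tq\<bar> < dl" and ht: "\<bar>t - Tq\<bar> < dl" and e1: "Ef s t = 0" and e2: "Ef t s = 0"
    have st: "s = t"
    proof (rule ccontr)
      assume ne: "s \<noteq> t"
      define phi where "phi l = Ef (t + l*(s-t)) (s + l*(t-s))" for l
      have inI: "\<bar>t + l*(s-t) - Tq\<bar> < dl" "\<bar>s + l*(t-s) - Tq\<bar> < dl" if "0 \<le> l" "l \<le> 1" for l
        using conv_in[OF that ht hs] conv_in[OF that hs ht] by auto
      have dphi: "(phi has_real_derivative (t-s) * Gp (t + l*(s-t)) (s + l*(t-s))) (at l)"
        if "0 \<le> l" "l \<le> 1" for l
        unfolding phi_def by (rule Ef_path_deriv) (use sinne inI[OF that] in auto)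
      have "phi 0 = phi 1" using e1 e2 by (simp add: phi_def)
      moreover have "continuous_on {0..1} phi"
        using dphi by (intro continuous_at_imp_continuous_on) (metis DERIV_isCont atLeastAtMost_iff)
      moreover have "phi differentiable (at x)" if "0 < x" "x < 1" for x
        using dphi[of x] that real_differentiable_def by auto
      ultimately obtain z where z: "0 < z" "z < 1" "DERIV phi z :> 0"
        using Rolle[of 0 1 phi] by auto
      then have "(t-s) * Gp (t + z*(s-t)) (s + z*(t-s)) = 0"
        using dphi[of z] DERIV_unique[OF z(3)] z by force
      moreover have "0 < Gp (t + z*(s-t)) (s + z*(t-s))" using Gpos inI[of z] z by auto
      ultimately show False using ne by simp
    qed
    have "s = Tq"
    proof (rule ccontr)
      assume ne: "s \<noteq> Tq"
      define a where "a = min s Tq"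
      define b where "b = max s Tq"
      have ab: "a < b" using ne by (auto simp: a_def b_def)
      have inab: "\<bar>y - Tq\<bar> < dl" if "a \<le> y" "y \<le> b" for y
        using that hs dl by (auto simp: a_def b_def abs_less_iff)
      have dpsi: "((\<lambda>u. Ef u u) has_real_derivative Psd y) (at y)" if "a \<le> y" "y \<le> b" for y
        by (rule Ef_diag_deriv) (use sinne inab[OF that] in auto)
      have "Ef a a = Ef b b" using e1 st Ef_T by (auto simp: a_def b_def min_def max_def)
      moreover have "continuous_on {a..b} (\<lambda>u. Ef u u)"
        using dpsi by (intro continuous_at_imp_continuous_on) (metis DERIV_isCont atLeastAtMost_iff)
      moreover have "(\<lambda>u. Ef u u) differentiable (at x)" if "a < x" "x < b" for x
        using dpsi[of x] that real_differentiable_def by auto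
      ultimately obtain z where z: "a < z" "z < b" "DERIV (\<lambda>u. Ef u u) z :> 0"
        using Rolle[of a b "\<lambda>u. Ef u u"] ab by auto
      then have "Psd z = 0" using dpsi[of z] DERIV_unique[OF z(3)] by force
      moreover have "Psd z < 0" using Pneg inab[of z] z by auto
      ultimately show False by simp
    qed
    then show "s = Tq \<and> t = Tq" using st by simp
  qed
qed

lemma FY_Sinv: "FY (Sinv p) = Sinv (FX p)"
  using Sinv_FY[of "Sinv p"] by (metis Sinv_Sinv)

lemma sol_z: "zc (sol a b t) = zf b t"
  by (simp add: sol_def zc_def)

lemma sol_end:
  assumes "0 < t" "t < pi"
  shows "sol a (Bf t) t = (exp (-(2*cC*t)) * a + hH * Rf t, - gf t, 0)"
proof -
  have "sin t \<noteq> 0" using assms sin_gt_zero by force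
  then show ?thesis using zf_Bf[of t "Bf t"] by (simp add: sol_def xf_Bf yf_Bf)
qed

lemma orbit_params:
  assumes "crossing_periodic_orbit (-2*cC) cC hH (-(1+cC^2)) G"
  shows "\<exists>t1 t2. 0 < t1 \<and> t1 < pi \<and> 0 < t2 \<and> t2 < pi \<and> Ef t1 t2 = 0 \<and> Ef t2 t1 = 0 \<and> 0 < Bf t1
    \<and> (gf t2, Bf t1, 0) \<in> G \<and> (-(Bf t2), -(gf t1), 0) \<in> G
    \<and> G = sol (gf t2) (Bf t1) ` {0..t1} \<union> (\<lambda>t. Sinv (sol (gf t1) (Bf t2) t)) ` {0..t2}"
proof -
  obtain p0 p1 t1 t2 \<phi> \<psi> where t1: "t1 > 0" and t2: "t2 > 0" and
    e: "\<phi> 0 = p0" "\<phi> t1 = p1" "\<psi> 0 = p1" "\<psi> t2 = p0" and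
    dphi: "\<forall>t\<in>{0..t1}. (\<phi> has_vector_derivative FX (\<phi> t)) (at t within {0..t1})" and
    dpsi: "\<forall>t\<in>{0..t2}. (\<psi> has_vector_derivative FY (\<psi> t)) (at t within {0..t2})" and
    zphi: "\<forall>t\<in>{0..t1}. zc (\<phi> t) \<ge> 0" and zpsi: "\<forall>t\<in>{0<..<t2}. zc (\<psi> t) < 0" and
    tr0: "transversal (-2*cC) cC hH (-(1+cC^2)) p0" and tr1: "transversal (-2*cC) cC hH (-(1+cC^2)) p1" and
    G: "G = \<phi> ` {0..t1} \<union> \<psi> ` {0..t2}"
    using assms unfolding crossing_periodic_orbit_def by blast
  obtain a b where p0: "p0 = (a, b, 0)" using tr0 by (cases p0) (auto simp: transversal_def zc_def)
  have z1: "zc p1 = 0" using tr1 by (simp add: transversal_def)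
  have phi: "\<forall>t\<in>{0..t1}. \<phi> t = sol a b t" using X_unique[of t1 \<phi> a b] t1 e p0 dphi by auto
  have "\<forall>t\<in>{0..t1}. zf b t \<ge> 0" using zphi phi sol_z by auto
  moreover have "zf b t1 = 0" using phi[rule_format, of t1] e z1 t1 sol_z by auto
  ultimately have A: "t1 < pi" "b = Bf t1" "b > 0" using arc[OF t1] by auto
  define x1 where "x1 = exp (-(2*cC*t1)) * a + hH * Rf t1"
  have p1: "p1 = (x1, - gf t1, 0)" using phi e t1 A sol_end[of t1 a] by (auto simp: x1_def)
  define ch where "ch t = Sinv (\<psi> t)" for t
  have dchi: "\<forall>t\<in>{0..t2}. (ch has_vector_derivative FX (ch t)) (at t within {0..t2})"
    using dpsi Y_to_X unfolding ch_def by blast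
  have chi0: "ch 0 = (gf t1, - x1, 0)" using e p1 by (simp add: ch_def Sinv_def)
  have chi: "\<forall>t\<in>{0..t2}. ch t = sol (gf t1) (- x1) t" using X_unique[OF _ chi0 dchi] t2 by auto
  have "\<forall>t\<in>{0..t2}. zf (- x1) t \<ge> 0"
  proof
    fix t assume t: "t \<in> {0..t2}"
    have "zc (\<psi> t) \<le> 0"
    proof (cases "t = 0 \<or> t = t2")
      case True
      have "zc (\<psi> 0) = 0" using e(3) z1 by simp
      moreover have "zc (\<psi> t2) = 0" using e(4) p0 by (simp add: zc_def)
      ultimately show ?thesis using True by auto
    next
      case False
      then have "t \<in> {0<..<t2}" using t by auto
      then show ?thesis using zpsi by (meson less_imp_le)
    qed
    moreover have "ch t = sol (gf t1) (- x1) t" using chi t by blast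
    then have "zc (ch t) = zf (- x1) t" by (simp only: sol_z)
    ultimately show "zf (- x1) t \<ge> 0" by (simp add: ch_def)
  qed
  moreover have "zf (- x1) t2 = 0"
  proof -
    have "ch t2 = sol (gf t1) (- x1) t2" using chi t2 by auto
    then have "zc (ch t2) = zf (- x1) t2" by (simp only: sol_z)
    moreover have "zc (ch t2) = 0" using e p0 by (simp add: ch_def zc_def Sinv_def)
    ultimately show ?thesis by simp
  qed
  ultimately have B: "t2 < pi" "- x1 = Bf t2" using arc[OF t2] by auto
  have "Sinv (\<psi> t2) = sol (gf t1) (Bf t2) t2" using chi t2 B by (auto simp: ch_def)
  then have "Sinv p0 = sol (gf t1) (Bf t2) t2" using e by simp
  then have "(-b, -a, 0) = (exp (-(2*cC*t2)) * gf t1 + hH * Rf t2, - gf t2, 0)"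
    using sol_end[OF t2 B(1)] p0 by (simp add: Sinv_def)
  then have ab: "a = gf t2" "b = -(exp (-(2*cC*t2)) * gf t1 + hH * Rf t2)" by auto
  have E1: "Ef t1 t2 = 0" using B ab by (simp add: Ef_def x1_def)
  have E2: "Ef t2 t1 = 0" using A ab by (simp add: Ef_def)
  have "\<phi> 0 \<in> G" "\<phi> t1 \<in> G" using G t1 by auto
  then have m0: "(gf t2, Bf t1, 0) \<in> G" and m1: "(-(Bf t2), -(gf t1), 0) \<in> G"
    using e p0 A ab p1 B minus_equation_iff[of x1] by auto
  have "\<phi> ` {0..t1} = sol (gf t2) (Bf t1) ` {0..t1}" using phi A ab by auto
  moreover have "\<psi> ` {0..t2} = (\<lambda>t. Sinv (sol (gf t1) (Bf t2) t)) ` {0..t2}"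
  proof -
    have "\<forall>t\<in>{0..t2}. \<psi> t = Sinv (sol (gf t1) (Bf t2) t)"
    proof
      fix t assume "t \<in> {0..t2}"
      then have "Sinv (\<psi> t) = sol (gf t1) (Bf t2) t" using chi B by (simp add: ch_def)
      then have "Sinv (Sinv (\<psi> t)) = Sinv (sol (gf t1) (Bf t2) t)" by simp
      then show "\<psi> t = Sinv (sol (gf t1) (Bf t2) t)" by simp
    qed
    then show ?thesis by auto
  qed
  ultimately have "G = sol (gf t2) (Bf t1) ` {0..t1} \<union> (\<lambda>t. Sinv (sol (gf t1) (Bf t2) t)) ` {0..t2}"
    using G by simp
  then show ?thesis using t1 t2 A B E1 E2 m0 m1 by blast
qed

lemma isCont_near:
  fixes f :: "real \<Rightarrow> real"
  assumes "isCont f x" "0 < e"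
  shows "\<exists>d>0. \<forall>y. \<bar>y - x\<bar> < d \<longrightarrow> \<bar>f y - f x\<bar> < e"
proof -
  from assms(1) have "f \<midarrow>x\<rightarrow> f x" by (simp add: isCont_def)
  from LIM_D[OF this assms(2)] obtain d where d: "d > 0" "\<forall>y. y \<noteq> x \<and> norm (y - x) < d \<longrightarrow> norm (f y - f x) < e"
    by blast
  show ?thesis
  proof (intro exI[of _ d] conjI allI impI)
    fix y assume "\<bar>y - x\<bar> < d"
    then show "\<bar>f y - f x\<bar> < e" using d assms(2) by (cases "y = x") auto
  qed (use d in auto)
qed

abbreviation "a0 \<equiv> gf Tq"
abbreviation "b0 \<equiv> Bf Tq"
definition G0 :: "pt set" where
  "G0 = sol a0 b0 ` {0..Tq} \<union> (\<lambda>t. Sinv (sol a0 b0 t)) ` {0..Tq}"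

lemma ab0_pos: "0 < a0" "0 < b0"
  using cC_bounds by (simp_all add: vals_T)

lemma sol0_end: "sol a0 b0 Tq = (- b0, - a0, 0)"
proof -
  have "exp (-(2*cC*Tq)) * a0 + hH * Rf Tq = - b0" using Ef_T by (simp add: Ef_def)
  then show ?thesis using sol_end[OF Tq_pos, of a0] by simp
qed

lemma zf0_pos: "0 < t \<Longrightarrow> t < Tq \<Longrightarrow> 0 < zf b0 t"
proof -
  assume t: "0 < t" "t < Tq"
  then have "sin t > 0" using Tq_pos by (intro sin_gt_zero) auto
  moreover have "Bf t < b0" using Bf_mono[of t Tq] t Tq_pos by auto
  ultimately show ?thesis using zf_Bf[of t b0] by simp
qed

lemma near_ends:
  assumes "0 < \<eta>"
  shows "\<exists>\<epsilon>>0. \<forall>\<tau>\<in>{0..Tq}. \<bar>zf b0 \<tau>\<bar> < \<epsilon> \<longrightarrow>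
     (\<bar>xf a0 b0 \<tau> - a0\<bar> < \<eta> \<and> \<bar>yf b0 \<tau> - b0\<bar> < \<eta>) \<or> (\<bar>xf a0 b0 \<tau> + b0\<bar> < \<eta> \<and> \<bar>yf b0 \<tau> + a0\<bar> < \<eta>)"
proof -
  have cx: "isCont (xf a0 b0) x" for x unfolding xf_def by (intro continuous_intros)
  have cy: "isCont (yf b0) x" for x unfolding yf_def zf_def by (intro continuous_intros)
  have cz: "isCont (zf b0) x" for x unfolding zf_def by (intro continuous_intros)
  have v0: "xf a0 b0 0 = a0" "yf b0 0 = b0" using sol0[of a0 b0] by (simp_all add: sol_def)
  have vT: "xf a0 b0 Tq = - b0" "yf b0 Tq = - a0" using sol0_end by (simp_all add: sol_def)
  obtain d1 where d1: "d1 > 0" "\<forall>y. \<bar>y - 0\<bar> < d1 \<longrightarrow> \<bar>xf a0 b0 y - xf a0 b0 0\<bar> < \<eta>"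
    using isCont_near[OF cx assms] by blast
  obtain d2 where d2: "d2 > 0" "\<forall>y. \<bar>y - 0\<bar> < d2 \<longrightarrow> \<bar>yf b0 y - yf b0 0\<bar> < \<eta>"
    using isCont_near[OF cy assms] by blast
  obtain d3 where d3: "d3 > 0" "\<forall>y. \<bar>y - Tq\<bar> < d3 \<longrightarrow> \<bar>xf a0 b0 y - xf a0 b0 Tq\<bar> < \<eta>"
    using isCont_near[OF cx assms] by blast
  obtain d4 where d4: "d4 > 0" "\<forall>y. \<bar>y - Tq\<bar> < d4 \<longrightarrow> \<bar>yf b0 y - yf b0 Tq\<bar> < \<eta>"
    using isCont_near[OF cy assms] by blast
  define d where "d = min (min d1 d2) (min d3 (min d4 (Tq/2)))"
  have d: "0 < d" "d \<le> Tq/2" using d1 d2 d3 d4 Tq_pos by (auto simp: d_def)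
  have ne: "{d..Tq-d} \<noteq> {}" using d by auto
  obtain m where m: "m \<in> {d..Tq-d}" "\<forall>y\<in>{d..Tq-d}. zf b0 m \<le> zf b0 y"
    using continuous_attains_inf[OF compact_Icc ne, of "zf b0"] cz
    by (meson continuous_at_imp_continuous_on)
  have mpos: "0 < zf b0 m" using m(1) d by (intro zf0_pos) auto
  show ?thesis
  proof (intro exI[of _ "zf b0 m"] conjI mpos ballI impI)
    fix \<tau> assume t: "\<tau> \<in> {0..Tq}" and z: "\<bar>zf b0 \<tau>\<bar> < zf b0 m"
    have "\<tau> \<notin> {d..Tq-d}" using m(2) z by force
    then have "\<tau> < d \<or> Tq - d < \<tau>" by auto
    then show "(\<bar>xf a0 b0 \<tau> - a0\<bar> < \<eta> \<and> \<bar>yf b0 \<tau> - b0\<bar> < \<eta>) \<or> (\<bar>xf a0 b0 \<tau> + b0\<bar> < \<eta> \<and> \<bar>yf b0 \<tau> + a0\<bar> < \<eta>)"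
    proof
      assume "\<tau> < d"
      then have "\<bar>\<tau> - 0\<bar> < d1" "\<bar>\<tau> - 0\<bar> < d2" using t by (auto simp: d_def)
      then show ?thesis using d1 d2 v0 by auto
    next
      assume "Tq - d < \<tau>"
      then have "\<bar>\<tau> - Tq\<bar> < d3" "\<bar>\<tau> - Tq\<bar> < d4" using t by (auto simp: d_def)
      then show ?thesis using d3 d4 vT by auto
    qed
  qed
qed

lemma near_G0:
  assumes "0 < \<eta>"
  shows "\<exists>\<epsilon>>0. \<forall>q\<in>G0. \<bar>zc q\<bar> < \<epsilon> \<longrightarrow>
     (\<bar>fst q - a0\<bar> < \<eta> \<and> \<bar>fst (snd q) - b0\<bar> < \<eta>) \<or> (\<bar>fst q + b0\<bar> < \<eta> \<and> \<bar>fst (snd q) + a0\<bar> < \<eta>)"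
proof -
  obtain e where e: "e > 0" "\<forall>\<tau>\<in>{0..Tq}. \<bar>zf b0 \<tau>\<bar> < e \<longrightarrow>
     (\<bar>xf a0 b0 \<tau> - a0\<bar> < \<eta> \<and> \<bar>yf b0 \<tau> - b0\<bar> < \<eta>) \<or> (\<bar>xf a0 b0 \<tau> + b0\<bar> < \<eta> \<and> \<bar>yf b0 \<tau> + a0\<bar> < \<eta>)"
    using near_ends[OF assms] by blast
  show ?thesis
  proof (intro exI[of _ e] conjI e(1) ballI impI)
    fix q assume q: "q \<in> G0" and z: "\<bar>zc q\<bar> < e"
    from q obtain \<tau> where t: "\<tau> \<in> {0..Tq}" and qd: "q = sol a0 b0 \<tau> \<or> q = Sinv (sol a0 b0 \<tau>)"
      unfolding G0_def by auto
    from qd show "(\<bar>fst q - a0\<bar> < \<eta> \<and> \<bar>fst (snd q) - b0\<bar> < \<eta>) \<or> (\<bar>fst q + b0\<bar> < \<eta> \<and> \<bar>fst (snd q) + a0\<bar> < \<eta>)"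
    proof
      assume qq: "q = sol a0 b0 \<tau>"
      then have "\<bar>zf b0 \<tau>\<bar> < e" using z by (simp add: sol_z)
      then show ?thesis using e(2) t qq by (simp add: sol_def)
    next
      assume qq: "q = Sinv (sol a0 b0 \<tau>)"
      then have "\<bar>zf b0 \<tau>\<bar> < e" using z by (simp add: sol_z)
      then have "(\<bar>xf a0 b0 \<tau> - a0\<bar> < \<eta> \<and> \<bar>yf b0 \<tau> - b0\<bar> < \<eta>) \<or> (\<bar>xf a0 b0 \<tau> + b0\<bar> < \<eta> \<and> \<bar>yf b0 \<tau> + a0\<bar> < \<eta>)"
        using e(2) t by blast
      then show ?thesis using qq by (auto simp: sol_def Sinv_def abs_minus_commute)
    qed
  qed
qed

lemma G0_cpo: "crossing_periodic_orbit (-2*cC) cC hH (-(1+cC^2)) G0"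
  unfolding crossing_periodic_orbit_def
proof (intro exI conjI)
  show "0 < Tq" by (rule Tq_pos)
  show "0 < Tq" by (rule Tq_pos)
  show "sol a0 b0 0 = (a0, b0, 0)" by (rule sol0)
  show "sol a0 b0 Tq = (- b0, - a0, 0)" by (rule sol0_end)
  show "Sinv (sol a0 b0 0) = (- b0, - a0, 0)" by (simp add: sol0 Sinv_def)
  show "Sinv (sol a0 b0 Tq) = (a0, b0, 0)" by (simp add: sol0_end Sinv_def)
  show "\<forall>t\<in>{0..Tq}. (sol a0 b0 has_vector_derivative FX (sol a0 b0 t)) (at t within {0..Tq})"
    using sol_deriv by blast
  show "\<forall>t\<in>{0..Tq}. ((\<lambda>t. Sinv (sol a0 b0 t)) has_vector_derivative FY (Sinv (sol a0 b0 t))) (at t within {0..Tq})"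
    using Sinv_deriv[OF sol_deriv] unfolding FY_Sinv by blast
  show "\<forall>t\<in>{0..Tq}. zc (sol a0 b0 t) \<ge> 0"
  proof
    fix t assume t: "t \<in> {0..Tq}"
    show "zc (sol a0 b0 t) \<ge> 0"
    proof (cases "t = 0 \<or> t = Tq")
      case True then show ?thesis using sol0_end by (auto simp: sol0 zc_def)
    next
      case False then show ?thesis using zf0_pos[of t] t by (simp add: sol_z)
    qed
  qed
  show "\<forall>t\<in>{0<..<Tq}. zc (Sinv (sol a0 b0 t)) < 0"
    using zf0_pos by (simp add: sol_z)
  show "transversal (-2*cC) cC hH (-(1+cC^2)) (a0, b0, 0)"
    using ab0_pos by (simp add: transversal_def zc_def fX_def fY_def)
  show "transversal (-2*cC) cC hH (-(1+cC^2)) (- b0, - a0, 0)"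
    using ab0_pos by (simp add: transversal_def zc_def fX_def fY_def)
  show "G0 = sol a0 b0 ` {0..Tq} \<union> (\<lambda>t. Sinv (sol a0 b0 t)) ` {0..Tq}" by (simp add: G0_def)
qed

lemma G0_sym: "Sinv ` G0 = G0"
  unfolding G0_def image_Un image_image by auto

lemma infdist_lt:
  assumes "infdist x A < e" "A \<noteq> {}"
  shows "\<exists>a\<in>A. dist x a < e"
  using assms by (simp add: infdist_notempty cINF_less_iff)

lemma G0_ne: "G0 \<noteq> {}"
  unfolding G0_def using Tq_pos by auto

lemma comp_le: "\<bar>fst p - fst q\<bar> \<le> dist p q" "\<bar>fst (snd p) - fst (snd q)\<bar> \<le> dist p q"
    "\<bar>zc p - zc q\<bar> \<le> dist p q" for p q :: pt
proof -
  show "\<bar>fst p - fst q\<bar> \<le> dist p q" using dist_fst_le[of p q] by (simp add: dist_real_def)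
  show "\<bar>fst (snd p) - fst (snd q)\<bar> \<le> dist p q"
    using dist_fst_le[of "snd p" "snd q"] dist_snd_le[of p q] by (simp add: dist_real_def)
  show "\<bar>zc p - zc q\<bar> \<le> dist p q"
    using dist_snd_le[of "snd p" "snd q"] dist_snd_le[of p q] by (simp add: dist_real_def zc_def)
qed

lemma lin_aux:
  fixes x y X Y e \<eta> \<rho> a b :: real
  assumes "\<bar>x - X\<bar> < e" "\<bar>y - Y\<bar> < e" "e \<le> \<eta>" "2*\<eta> \<le> \<rho>" "2*\<eta> \<le> a" "2*\<eta> \<le> b"
    "(\<bar>X - a\<bar> < \<eta> \<and> \<bar>Y - b\<bar> < \<eta>) \<or> (\<bar>X + b\<bar> < \<eta> \<and> \<bar>Y + a\<bar> < \<eta>)"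
  shows "(y > 0 \<longrightarrow> \<bar>y - b\<bar> < \<rho>) \<and> (x < 0 \<longrightarrow> \<bar>x + b\<bar> < \<rho>)"
  using assms unfolding abs_less_iff by linarith

lemma G0_isolated:
  "\<exists>\<epsilon>>0. \<forall>G. crossing_periodic_orbit (-2*cC) cC hH (-(1+cC^2)) G \<and> (\<forall>q\<in>G. infdist q G0 < \<epsilon>) \<longrightarrow> G = G0"
proof -
  obtain dl where dl: "dl > 0" "dl \<le> pi/2"
    and lu: "\<And>s t. \<bar>s - Tq\<bar> < dl \<Longrightarrow> \<bar>t - Tq\<bar> < dl \<Longrightarrow> Ef s t = 0 \<Longrightarrow> Ef t s = 0 \<Longrightarrow> s = Tq \<and> t = Tq"
    using local_unique by blast
  define tm where "tm = Tq - dl/2"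
  define tp where "tp = Tq + dl/2"
  have tmp: "0 < tm" "tm < Tq" "Tq < tp" "tp < pi" using dl by (auto simp: tm_def tp_def Tq_def)
  define \<rho> where "\<rho> = min (b0 - Bf tm) (Bf tp - b0)"
  have rho: "0 < \<rho>" using Bf_mono[of tm Tq] Bf_mono[of Tq tp] tmp by (auto simp: \<rho>_def)
  have tclose: "\<bar>t - Tq\<bar> < dl" if "0 < t" "t < pi" "\<bar>Bf t - b0\<bar> < \<rho>" for t
  proof -
    have "tm < t"
    proof (rule ccontr)
      assume "\<not> tm < t"
      then have "Bf t \<le> Bf tm" using Bf_mono[of t tm] that tmp by (cases "t = tm") auto
      then show False using that by (auto simp: \<rho>_def)
    qed
    moreover have "t < tp"
    proof (rule ccontr)
      assume "\<not> t < tp"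
      then have "Bf tp \<le> Bf t" using Bf_mono[of tp t] that tmp by (cases "t = tp") auto
      then show False using that by (auto simp: \<rho>_def)
    qed
    ultimately show ?thesis using dl by (auto simp: tm_def tp_def)
  qed
  define \<eta> where "\<eta> = min \<rho> (min a0 b0) / 2"
  have eta: "0 < \<eta>" "2*\<eta> \<le> \<rho>" "2*\<eta> \<le> a0" "2*\<eta> \<le> b0" using rho ab0_pos by (auto simp: \<eta>_def)
  obtain e1 where e1: "e1 > 0" "\<forall>q\<in>G0. \<bar>zc q\<bar> < e1 \<longrightarrow>
     (\<bar>fst q - a0\<bar> < \<eta> \<and> \<bar>fst (snd q) - b0\<bar> < \<eta>) \<or> (\<bar>fst q + b0\<bar> < \<eta> \<and> \<bar>fst (snd q) + a0\<bar> < \<eta>)"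
    using near_G0[OF eta(1)] by blast
  define \<epsilon> where "\<epsilon> = min e1 \<eta>"
  have eps: "0 < \<epsilon>" "\<epsilon> \<le> e1" "\<epsilon> \<le> \<eta>" using e1 eta by (auto simp: \<epsilon>_def)
  have nearP: "(y > 0 \<longrightarrow> \<bar>y - b0\<bar> < \<rho>) \<and> (x < 0 \<longrightarrow> \<bar>x + b0\<bar> < \<rho>)"
    if inf: "infdist (x, y, 0) G0 < \<epsilon>" for x y
  proof -
    obtain q where q: "q \<in> G0" "dist (x, y, 0) q < \<epsilon>" using infdist_lt[OF inf G0_ne] by blast
    have c: "\<bar>x - fst q\<bar> < \<epsilon>" "\<bar>y - fst (snd q)\<bar> < \<epsilon>" "\<bar>0 - zc q\<bar> < \<epsilon>"
      using comp_le[of "(x, y, 0)" q] q(2) by (auto simp: zc_def)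
    then have "\<bar>zc q\<bar> < e1" using eps by simp
    then have "(\<bar>fst q - a0\<bar> < \<eta> \<and> \<bar>fst (snd q) - b0\<bar> < \<eta>) \<or> (\<bar>fst q + b0\<bar> < \<eta> \<and> \<bar>fst (snd q) + a0\<bar> < \<eta>)"
      using e1(2) q(1) by blast
    then show ?thesis using lin_aux[OF c(1,2) eps(3) eta(2,3,4)] by blast
  qed
  show ?thesis
  proof (intro exI[of _ \<epsilon>] conjI eps(1) allI impI)
    fix G assume H: "crossing_periodic_orbit (-2*cC) cC hH (-(1+cC^2)) G \<and> (\<forall>q\<in>G. infdist q G0 < \<epsilon>)"
    have HC: "crossing_periodic_orbit (-2*cC) cC hH (-(1+cC^2)) G" and HG: "\<forall>q\<in>G. infdist q G0 < \<epsilon>"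
      using H by auto
    obtain t1 t2 where t: "0 < t1" "t1 < pi" "0 < t2" "t2 < pi" and E: "Ef t1 t2 = 0" "Ef t2 t1 = 0"
      and bp: "0 < Bf t1" and m0: "(gf t2, Bf t1, 0) \<in> G" and m1: "(-(Bf t2), -(gf t1), 0) \<in> G"
      and GG: "G = sol (gf t2) (Bf t1) ` {0..t1} \<union> (\<lambda>t. Sinv (sol (gf t1) (Bf t2) t)) ` {0..t2}"
      using orbit_params[OF HC] by (elim exE conjE) blast
    have i0: "infdist (gf t2, Bf t1, 0) G0 < \<epsilon>" using HG m0 by blast
    have i1: "infdist (-(Bf t2), -(gf t1), 0) G0 < \<epsilon>" using HG m1 by blast
    have "\<bar>Bf t1 - b0\<bar> < \<rho>" using nearP[OF i0] bp by blast
    then have c1: "\<bar>t1 - Tq\<bar> < dl" using tclose t by blast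
    have "0 < Bf t2" using Bf_pos t by blast
    then have "\<bar>-(Bf t2) + b0\<bar> < \<rho>" using nearP[OF i1] by simp
    then have "\<bar>Bf t2 - b0\<bar> < \<rho>" by (simp add: abs_minus_commute)
    then have c2: "\<bar>t2 - Tq\<bar> < dl" using tclose t by blast
    have "t1 = Tq" "t2 = Tq" using lu[OF c1 c2 E] by auto
    then show "G = G0" using GG by (simp add: G0_def)
  qed
qed

theorem theorem1:
  shows "\<exists>C H \<Lambda> \<gamma>. (-2 * C) \<noteq> 0 \<and> symmetric_limit_cycle (-2 * C) C H \<Lambda> \<gamma>"
proof (intro exI conjI)
  show "-2 * cC \<noteq> 0" using cC_bounds by simp
  show "symmetric_limit_cycle (-2 * cC) cC hH (-(1+cC^2)) G0"
    unfolding symmetric_limit_cycle_def limit_cycle_def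
    using G0_cpo G0_isolated G0_sym by blast
qed

end
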